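(* Let $\Delta$ be a $d$-dimensional pure simplicial forest. Then for every $i<d$, the $(i,d)$-incidence complex $H_\Delta(i,d)$ of $\Delta$ is a simplicial forest.
   Context: A facet $F$ of a simplicial complex $\Delta$ is a leaf if either $F$ is the only facet, or there is a facet $G\neq F$ with $F\cap F'\subseteq F\cap G$ for every facet $F'\neq F$. $\Delta$ is a simplicial tree if it is connected and every subcomplex generated by a nonempty subset of its facets has a leaf; a simplicial forest if each connected component is a simplicial tree. $\Delta$ is pure if all facets have the same dimension. The $(i,j)$-incidence complex $H_\Delta(i,j)$ is the simplicial complex whose vertex set is the set of $i$-dimensional faces of $\Delta$, and whose facets are exactly the sets of the form $\{\tau:\tau\subset\sigma,\ \dim\tau=i\}$ for $\sigma$ a $j$-dimensional face of $\Delta$. *)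

theory Defs
  imports Main
begin

text \<open>A simplicial complex is represented by its (finite) set of facets:
  a finite antichain of finite vertex sets. Faces are subsets of facets;
  a face of cardinality k+1 has dimension k.\<close>

definition simplicial_complex :: "'a set set \<Rightarrow> bool" where
  "simplicial_complex F \<longleftrightarrow> finite F \<and> (\<forall>A\<in>F. finite A) \<and>
     (\<forall>A\<in>F. \<forall>B\<in>F. A \<subseteq> B \<longrightarrow> A = B)"

definition faces :: "'a set set \<Rightarrow> 'a set set" where
  "faces F = {\<tau>. \<exists>\<sigma>\<in>F. \<tau> \<subseteq> \<sigma>}"

definition pure_of_dim :: "'a set set \<Rightarrow> nat \<Rightarrow> bool" where
  "pure_of_dim F d \<longleftrightarrow> (\<forall>\<sigma>\<in>F. card \<sigma> = d + 1)"

definition is_leaf :: "'a set set \<Rightarrow> 'a set \<Rightarrow> bool" where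
  "is_leaf F A \<longleftrightarrow> A \<in> F \<and>
     (F = {A} \<or> (\<exists>G\<in>F. G \<noteq> A \<and> (\<forall>A'\<in>F. A' \<noteq> A \<longrightarrow> A \<inter> A' \<subseteq> A \<inter> G)))"

definition facet_adj :: "'a set set \<Rightarrow> ('a set \<times> 'a set) set" where
  "facet_adj F = {(A, B). A \<in> F \<and> B \<in> F \<and> A \<inter> B \<noteq> {}}"

definition connected_complex :: "'a set set \<Rightarrow> bool" where
  "connected_complex F \<longleftrightarrow> (\<forall>A\<in>F. \<forall>B\<in>F. (A, B) \<in> (facet_adj F)\<^sup>*)"

definition simplicial_tree :: "'a set set \<Rightarrow> bool" where
  "simplicial_tree F \<longleftrightarrow> connected_complex F \<and>
     (\<forall>S. S \<subseteq> F \<and> S \<noteq> {} \<longrightarrow> (\<exists>A. is_leaf S A))"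

definition components :: "'a set set \<Rightarrow> 'a set set set" where
  "components F = {(facet_adj F)\<^sup>* `` {A} | A. A \<in> F}"

definition simplicial_forest :: "'a set set \<Rightarrow> bool" where
  "simplicial_forest F \<longleftrightarrow> (\<forall>C\<in>components F. simplicial_tree C)"

text \<open>The (i,j)-incidence complex: vertices are the i-faces of \<Delta>; its facets
  are the sets of i-faces of the j-faces of \<Delta>.\<close>
definition incidence_complex :: "'a set set \<Rightarrow> nat \<Rightarrow> nat \<Rightarrow> 'a set set set" where
  "incidence_complex F i j =
     (\<lambda>\<sigma>. {\<tau>. \<tau> \<subseteq> \<sigma> \<and> card \<tau> = i + 1}) ` {\<sigma> \<in> faces F. card \<sigma> = j + 1}"

end

theory Submission
  imports Defs
begin

lemma comp_connected:
  assumes "C \<in> components F"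
  shows "connected_complex C"
proof -
  let ?R = "facet_adj F"
  obtain A0 where A0: "A0 \<in> F" and C: "C = ?R\<^sup>* `` {A0}"
    using assms unfolding components_def by auto
  have step: "(A0, B) \<in> (facet_adj C)\<^sup>*" if "(A0, B) \<in> ?R\<^sup>*" for B
    using that
  proof (induction rule: rtrancl_induct)
    case base then show ?case by simp
  next
    case (step y z)
    have "y \<in> C" "z \<in> C" using step C by auto
    moreover have "y \<inter> z \<noteq> {}" using step(2) unfolding facet_adj_def by auto
    ultimately have "(y, z) \<in> facet_adj C" unfolding facet_adj_def by auto
    with step(3) show ?case by (rule rtrancl_into_rtrancl)
  qed
  have symC: "sym (facet_adj C)" unfolding facet_adj_def sym_def by auto
  show ?thesis unfolding connected_complex_def
  proof (intro ballI)
    fix B B' assume "B \<in> C" "B' \<in> C"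
    then have h1: "(A0, B) \<in> (facet_adj C)\<^sup>*" "(A0, B') \<in> (facet_adj C)\<^sup>*"
      using step C by auto
    have "(B, A0) \<in> (facet_adj C)\<^sup>*"
      using h1(1) sym_rtrancl[OF symC] by (meson symD)
    then show "(B, B') \<in> (facet_adj C)\<^sup>*" using h1(2) by (rule rtrancl_trans)
  qed
qed

lemma forest_leaf:
  assumes "simplicial_forest F" "S \<subseteq> F" "S \<noteq> {}"
  shows "\<exists>A. is_leaf S A"
proof -
  let ?R = "facet_adj F"
  obtain A0 where "A0 \<in> S" using assms by auto
  define T where "T = ?R\<^sup>* `` {A0}"
  have A0T: "A0 \<in> T" unfolding T_def by auto
  have "T \<in> components F" unfolding T_def components_def using \<open>A0 \<in> S\<close> assms by auto
  then have tree: "simplicial_tree T" using assms(1) unfolding simplicial_forest_def by auto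
  have TF: "T \<subseteq> F" unfolding T_def
  proof
    fix x assume "x \<in> ?R\<^sup>* `` {A0}"
    then have "(A0, x) \<in> ?R\<^sup>*" by auto
    then show "x \<in> F"
      using \<open>A0 \<in> S\<close> assms(2) by (induction rule: rtrancl_induct) (auto simp: facet_adj_def)
  qed
  have closed: "A' \<in> T" if "A \<in> T" "A' \<in> F" "A \<inter> A' \<noteq> {}" for A A'
  proof -
    have "A \<in> F" using that TF by auto
    then have "(A, A') \<in> ?R" using that unfolding facet_adj_def by auto
    then show ?thesis using that(1) unfolding T_def by (auto intro: rtrancl_into_rtrancl)
  qed
  have "S \<inter> T \<subseteq> T" "S \<inter> T \<noteq> {}" using A0T \<open>A0 \<in> S\<close> by auto
  then obtain A where lf: "is_leaf (S \<inter> T) A" using tree unfolding simplicial_tree_def by blast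
  then have AS: "A \<in> S" and AT: "A \<in> T" unfolding is_leaf_def by auto
  have disj: "A \<inter> A' = {}" if "A' \<in> S" "A' \<notin> T" for A'
    using closed[OF AT, of A'] that assms(2) by auto
  show ?thesis
  proof (cases "S \<inter> T = {A}")
    case True
    show ?thesis
    proof (cases "S = {A}")
      case True then show ?thesis unfolding is_leaf_def by auto
    next
      case False
      then obtain G where G: "G \<in> S" "G \<noteq> A" using AS by auto
      have "\<forall>A'\<in>S. A' \<noteq> A \<longrightarrow> A \<inter> A' \<subseteq> A \<inter> G"
        using disj \<open>S \<inter> T = {A}\<close> by blast
      then have "is_leaf S A" unfolding is_leaf_def using G AS by blast
      then show ?thesis by blast
    qed
  next
    case False
    then obtain G where G: "G \<in> S \<inter> T" "G \<noteq> A"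
      and H: "\<forall>A'\<in>S \<inter> T. A' \<noteq> A \<longrightarrow> A \<inter> A' \<subseteq> A \<inter> G"
      using lf unfolding is_leaf_def by auto
    have "\<forall>A'\<in>S. A' \<noteq> A \<longrightarrow> A \<inter> A' \<subseteq> A \<inter> G"
      using H disj by blast
    then have "is_leaf S A" unfolding is_leaf_def using G AS by blast
    then show ?thesis by blast
  qed
qed

lemma union_subsets:
  assumes "finite s" "i + 1 \<le> card s" "x \<in> s"
  shows "\<exists>t. t \<subseteq> s \<and> card t = i + 1 \<and> x \<in> t"
proof -
  have "i \<le> card (s - {x})" using assms by auto
  then obtain u where u: "u \<subseteq> s - {x}" "card u = i" "finite u"
    by (rule obtain_subset_with_card_n)
  have "x \<notin> u" using u by auto
  then have "card (insert x u) = i + 1" using u by auto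
  then show ?thesis using u assms by (intro exI[of _ "insert x u"]) auto
qed

theorem proposition4p6:
  fixes \<Delta> :: "'a set set" and d i :: nat
  assumes "simplicial_complex \<Delta>"
    and "pure_of_dim \<Delta> d"
    and "simplicial_forest \<Delta>"
    and "i < d"
  shows "simplicial_forest (incidence_complex \<Delta> i d)"
proof -
  define \<phi> where "\<phi> = (\<lambda>\<sigma>::'a set. {\<tau>. \<tau> \<subseteq> \<sigma> \<and> card \<tau> = i + 1})"
  have fin: "\<And>A. A \<in> \<Delta> \<Longrightarrow> finite A" and cardA: "\<And>A. A \<in> \<Delta> \<Longrightarrow> card A = d + 1"
    using assms(1,2) unfolding simplicial_complex_def pure_of_dim_def by auto
  have fc: "{\<sigma> \<in> faces \<Delta>. card \<sigma> = d + 1} = \<Delta>"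
  proof
    show "{\<sigma> \<in> faces \<Delta>. card \<sigma> = d + 1} \<subseteq> \<Delta>"
    proof
      fix \<sigma> assume "\<sigma> \<in> {\<sigma> \<in> faces \<Delta>. card \<sigma> = d + 1}"
      then obtain \<tau> where "\<tau> \<in> \<Delta>" "\<sigma> \<subseteq> \<tau>" "card \<sigma> = d + 1" unfolding faces_def by auto
      then have "\<sigma> = \<tau>" using fin cardA card_subset_eq by metis
      then show "\<sigma> \<in> \<Delta>" using \<open>\<tau> \<in> \<Delta>\<close> by simp
    qed
  next
    show "\<Delta> \<subseteq> {\<sigma> \<in> faces \<Delta>. card \<sigma> = d + 1}" using cardA unfolding faces_def by auto
  qed
  have H: "incidence_complex \<Delta> i d = \<phi> ` \<Delta>"
    unfolding incidence_complex_def fc \<phi>_def by simp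
  have un: "\<Union>(\<phi> A) = A" if AD: "A \<in> \<Delta>" for A
  proof
    show "\<Union>(\<phi> A) \<subseteq> A" unfolding \<phi>_def by auto
    show "A \<subseteq> \<Union>(\<phi> A)"
    proof
      fix x assume "x \<in> A"
      then obtain t where "t \<subseteq> A" "card t = i + 1" "x \<in> t"
        using union_subsets[of A i x] fin[OF AD] cardA[OF AD] assms(4) by auto
      then show "x \<in> \<Union>(\<phi> A)" unfolding \<phi>_def by auto
    qed
  qed
  have inj: "inj_on \<phi> \<Delta>"
  proof (rule inj_onI)
    fix x y assume "x \<in> \<Delta>" "y \<in> \<Delta>" "\<phi> x = \<phi> y"
    then have "x = \<Union>(\<phi> y)" using un[of x] by simp
    then show "x = y" using un[of y] \<open>y \<in> \<Delta>\<close> by simp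
  qed
  have leafs: "\<exists>L. is_leaf S' L" if "S' \<subseteq> \<phi> ` \<Delta>" "S' \<noteq> {}" for S'
  proof -
    define S where "S = {A \<in> \<Delta>. \<phi> A \<in> S'}"
    have S'eq: "S' = \<phi> ` S" unfolding S_def using that(1) by auto
    have "S \<subseteq> \<Delta>" "S \<noteq> {}" using S'eq that(2) unfolding S_def by auto
    then obtain A where lf: "is_leaf S A" using forest_leaf assms(3) by blast
    then have AS: "A \<in> S" unfolding is_leaf_def by auto
    show ?thesis
    proof (cases "S = {A}")
      case True
      then have "is_leaf S' (\<phi> A)" unfolding is_leaf_def S'eq by auto
      then show ?thesis by blast
    next
      case False
      then obtain G where G: "G \<in> S" "G \<noteq> A"
        and HH: "\<forall>A'\<in>S. A' \<noteq> A \<longrightarrow> A \<inter> A' \<subseteq> A \<inter> G"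
        using lf unfolding is_leaf_def by auto
      have "\<phi> G \<noteq> \<phi> A" using inj G AS \<open>S \<subseteq> \<Delta>\<close> by (meson inj_on_def subsetD)
      moreover have "\<forall>X\<in>S'. X \<noteq> \<phi> A \<longrightarrow> \<phi> A \<inter> X \<subseteq> \<phi> A \<inter> \<phi> G"
      proof (intro ballI impI)
        fix X assume "X \<in> S'" "X \<noteq> \<phi> A"
        then obtain A' where "A' \<in> S" "X = \<phi> A'" "A' \<noteq> A" using S'eq by auto
        then have "A \<inter> A' \<subseteq> A \<inter> G" using HH by auto
        then show "\<phi> A \<inter> X \<subseteq> \<phi> A \<inter> \<phi> G" unfolding \<open>X = \<phi> A'\<close> \<phi>_def by auto
      qed
      ultimately have "is_leaf S' (\<phi> A)" unfolding is_leaf_def S'eq using G AS by blast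
      then show ?thesis by blast
    qed
  qed
  show ?thesis unfolding simplicial_forest_def
  proof
    fix C assume C: "C \<in> components (incidence_complex \<Delta> i d)"
    have "C \<subseteq> incidence_complex \<Delta> i d"
    proof -
      obtain X0 where X0: "X0 \<in> incidence_complex \<Delta> i d"
        and Ceq: "C = (facet_adj (incidence_complex \<Delta> i d))\<^sup>* `` {X0}"
        using C unfolding components_def by auto
      show ?thesis
      proof
        fix x assume "x \<in> C"
        then have "(X0, x) \<in> (facet_adj (incidence_complex \<Delta> i d))\<^sup>*" using Ceq by auto
        then show "x \<in> incidence_complex \<Delta> i d"
          using X0 by (induction rule: rtrancl_induct) (auto simp: facet_adj_def)
      qed
    qed
    then have "\<forall>S. S \<subseteq> C \<and> S \<noteq> {} \<longrightarrow> (\<exists>A. is_leaf S A)"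
      using leafs unfolding H by (meson subset_trans)
    then show "simplicial_tree C"
      unfolding simplicial_tree_def using comp_connected[OF C] by simp
  qed
qed

end
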